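(* Let $(X,\rho)$ be a compact metric space with at least two points and let $T\colon X\to X$ be continuous and topologically weakly mixing. There exist numbers $\delta_d\in(0,1)$, $d\ge2$, and a Mycielski set $M\subset X$ such that for every $d\ge2$, all pairwise distinct $x_1,\dots,x_d\in M$ and all integers $s_1,\dots,s_d\ge0$, the $d$-tuple $(T^{s_1}x_1,\dots,T^{s_d}x_d)$ is $\delta_d$-Li-Yorke. Moreover $\omega(x,T)=X$ for every $x\in M$.
   Context: $T$ is topologically weakly mixing if $T\times T$ is topologically transitive. A Mycielski set is a countable union of Cantor sets. A $d$-tuple is $\delta$-Li-Yorke if $\liminf_n\max_{i,j}\rho(T^nx_i,T^nx_j)=0$ and $\limsup_n\min_{i\ne j}\rho(T^nx_i,T^nx_j)>\delta$. $\omega(x,T)$ is the $\omega$-limit set of $x$. *)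

theory Defs
  imports "HOL-Analysis.Analysis"
begin

definition top_transitive :: "'a::topological_space set \<Rightarrow> ('a \<Rightarrow> 'a) \<Rightarrow> bool" where
  "top_transitive X f \<longleftrightarrow>
     (\<forall>U V. openin (top_of_set X) U \<and> openin (top_of_set X) V \<and> U \<noteq> {} \<and> V \<noteq> {}
        \<longrightarrow> (\<exists>n. (f ^^ n) ` U \<inter> V \<noteq> {}))"

definition weakly_mixing :: "'a::topological_space set \<Rightarrow> ('a \<Rightarrow> 'a) \<Rightarrow> bool" where
  "weakly_mixing X T \<longleftrightarrow> top_transitive (X \<times> X) (\<lambda>(x, y). (T x, T y))"

definition cantor_set :: "'a::metric_space set \<Rightarrow> bool" where
  "cantor_set C \<longleftrightarrow> C \<noteq> {} \<and> compact C \<and> (\<forall>x\<in>C. x islimpt C) \<and>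
     (\<forall>S. S \<subseteq> C \<and> connected S \<longrightarrow> (\<exists>a. S \<subseteq> {a}))"

definition mycielski_set :: "'a::metric_space set \<Rightarrow> bool" where
  "mycielski_set M \<longleftrightarrow> (\<exists>\<C>. countable \<C> \<and> \<C> \<noteq> {} \<and> (\<forall>C\<in>\<C>. cantor_set C) \<and> M = \<Union>\<C>)"

definition li_yorke_tuple :: "('a::metric_space \<Rightarrow> 'a) \<Rightarrow> nat \<Rightarrow> real \<Rightarrow> (nat \<Rightarrow> 'a) \<Rightarrow> bool" where
  "li_yorke_tuple T d \<delta> x \<longleftrightarrow>
     liminf (\<lambda>n. ereal (Max {dist ((T ^^ n) (x i)) ((T ^^ n) (x j)) | i j. i < d \<and> j < d})) = 0 \<and>
     limsup (\<lambda>n. ereal (Min {dist ((T ^^ n) (x i)) ((T ^^ n) (x j)) | i j. i < d \<and> j < d \<and> i \<noteq> j}))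
       > ereal \<delta>"

definition omega_limit :: "('a::metric_space \<Rightarrow> 'a) \<Rightarrow> 'a \<Rightarrow> 'a set" where
  "omega_limit T x = {y. \<exists>r. strict_mono r \<and> (\<lambda>k. (T ^^ r k) x) \<longlonglongrightarrow> y}"

end

theory Submission
  imports Defs "HOL-Analysis.Analysis"
begin


lemma funpow_comm: "(f ^^ m) ((f ^^ n) x) = (f ^^ n) ((f ^^ m) x)"
  by (metis funpow_add add.commute comp_apply)

lemma prod_iter: fixes T :: "'a \<Rightarrow> 'a" shows "((\<lambda>(x,y). (T x, T y)) ^^ n) (a,b) = ((T ^^ n) a, (T ^^ n) b)"
proof (induction n)
  case 0 show ?case by simp
next
  case (Suc n) then show ?case by simp
qed

locale wmsys =
  fixes X :: "'a::metric_space set" and T :: "'a \<Rightarrow> 'a"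
  assumes cX: "compact X" and two: "\<exists>a\<in>X. \<exists>b\<in>X. a \<noteq> b"
    and TX: "T ` X \<subseteq> X" and cT: "continuous_on X T" and wm: "weakly_mixing X T"
begin

lemma iter_in: "x \<in> X \<Longrightarrow> (T ^^ n) x \<in> X"
  by (induction n) (use TX in auto)

lemma iter_cont: "continuous_on X (T ^^ n)"
proof (induction n)
  case 0 then show ?case by (simp add: continuous_on_id)
next
  case (Suc n)
  have "continuous_on X (T \<circ> (T ^^ n))"
    by (rule continuous_on_compose[OF Suc]) (rule continuous_on_subset[OF cT], auto simp: iter_in)
  then show ?case by simp
qed

lemma open_pre: "openin (top_of_set X) U \<Longrightarrow> openin (top_of_set X) (X \<inter> (T ^^ n) -` U)"
  by (rule continuous_openin_preimage[OF iter_cont]) (auto simp: iter_in)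

lemma open_pre_ball: "openin (top_of_set X) (X \<inter> (T ^^ n) -` ball q r)"
  by (rule continuous_openin_preimage_gen[OF iter_cont]) auto

lemma wm_pairs:
  assumes "openin (top_of_set X) U1" "openin (top_of_set X) U2"
    "openin (top_of_set X) V1" "openin (top_of_set X) V2"
    "U1 \<noteq> {}" "U2 \<noteq> {}" "V1 \<noteq> {}" "V2 \<noteq> {}"
  shows "\<exists>n. \<exists>a\<in>U1. \<exists>b\<in>U2. (T ^^ n) a \<in> V1 \<and> (T ^^ n) b \<in> V2"
proof -
  have o: "openin (top_of_set (X \<times> X)) (U1 \<times> U2)" "openin (top_of_set (X \<times> X)) (V1 \<times> V2)"
    using assms by (simp_all add: openin_Times)
  have ne: "U1 \<times> U2 \<noteq> {}" "V1 \<times> V2 \<noteq> {}" using assms by auto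
  have tt: "top_transitive (X \<times> X) (\<lambda>(x, y). (T x, T y))"
    using wm by (simp add: weakly_mixing_def)
  have h: "openin (top_of_set (X \<times> X)) (U1 \<times> U2) \<and> openin (top_of_set (X \<times> X)) (V1 \<times> V2) \<and> U1 \<times> U2 \<noteq> {} \<and> V1 \<times> V2 \<noteq> {}
     \<longrightarrow> (\<exists>n. ((\<lambda>(x, y). (T x, T y)) ^^ n) ` (U1 \<times> U2) \<inter> (V1 \<times> V2) \<noteq> {})"
    using tt unfolding top_transitive_def by (rule spec[of _ "V1\<times>V2", OF spec[of _ "U1\<times>U2"]])
  have "\<exists>n. ((\<lambda>(x, y). (T x, T y)) ^^ n) ` (U1 \<times> U2) \<inter> (V1 \<times> V2) \<noteq> {}"
    by (rule mp[OF h]) (intro conjI o ne)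
  then obtain n where "((\<lambda>(x, y). (T x, T y)) ^^ n) ` (U1 \<times> U2) \<inter> (V1 \<times> V2) \<noteq> {}" ..
  moreover define Fn where "Fn = ((\<lambda>(x, y). (T x, T y)) ^^ n)"
  ultimately have "Fn ` (U1 \<times> U2) \<inter> (V1 \<times> V2) \<noteq> {}" by simp
  then have "\<exists>p. p \<in> Fn ` (U1 \<times> U2) \<inter> (V1 \<times> V2)" unfolding ex_in_conv .
  then obtain p where "p \<in> Fn ` (U1 \<times> U2) \<inter> (V1 \<times> V2)" ..
  then have p: "p \<in> Fn ` (U1 \<times> U2)" "p \<in> V1 \<times> V2" by auto
  from p(1) obtain ab where ab: "ab \<in> U1 \<times> U2" "p = Fn ab"
    by (rule imageE)
  obtain a b where "ab = (a, b)" by (cases ab)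
  with ab p(2) have "a \<in> U1" "b \<in> U2" "(T ^^ n) a \<in> V1" "(T ^^ n) b \<in> V2"
    by (simp_all add: prod_iter Fn_def)
  then show ?thesis by blast
qed

lemma Xne: "X \<noteq> {}" using two by auto

lemma perfect: assumes "x \<in> X" shows "x islimpt X"
proof (rule ccontr)
  assume "\<not> x islimpt X"
  then obtain S where S: "x \<in> S" "open S" "\<forall>y\<in>X. y \<in> S \<longrightarrow> y = x"
    unfolding islimpt_def by auto
  have XS: "X \<inter> S = {x}" using S assms by blast
  have "openin (top_of_set X) (X \<inter> S)" by (rule openin_open_Int[OF S(2)])
  then have o1: "openin (top_of_set X) {x}" using XS by simp
  obtain b where b: "b \<in> X" "b \<noteq> x" using two by auto
  have "openin (top_of_set X) (X \<inter> (- {x}))" by (rule openin_open_Int) (simp add: open_Compl)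
  then have o2: "openin (top_of_set X) (X - {x})" by (simp add: Diff_eq)
  have ne: "{x} \<noteq> {}" "X - {x} \<noteq> {}" using b by auto
  from wm_pairs[OF o1 o1 o1 o2 ne(1) ne(1) ne(1) ne(2)] obtain n a b where
    "a \<in> {x}" "b \<in> {x}" "(T ^^ n) a \<in> {x}" "(T ^^ n) b \<in> X - {x}"
    by blast
  then show False by auto
qed

lemma surj: "T ` X = X"
proof (rule ccontr)
  assume "T ` X \<noteq> X"
  then obtain z where z: "z \<in> X" "z \<notin> T ` X" using TX by auto
  have cl: "closed (T ` X)"
    using compact_continuous_image[OF cT cX] by (simp add: compact_imp_closed)
  obtain z' where z': "z' \<in> X" "z' \<in> - (T ` X)" "z' \<noteq> z"
    using perfect[OF z(1)] z(2) cl unfolding islimpt_def by (metis ComplI open_Compl)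
  define e where "e = dist z z' / 2"
  have e: "e > 0" using z' by (simp add: e_def)
  define V1 where "V1 = X \<inter> (- (T ` X) \<inter> ball z e)"
  define V2 where "V2 = X \<inter> (- (T ` X) \<inter> ball z' e)"
  have o1: "openin (top_of_set X) V1" unfolding V1_def using cl
    by (intro openin_open_Int) auto
  have o2: "openin (top_of_set X) V2" unfolding V2_def using cl
    by (intro openin_open_Int) auto
  have ne: "V1 \<noteq> {}" "V2 \<noteq> {}" using z z' e by (auto simp: V1_def V2_def)
  from wm_pairs[OF o1 o1 o1 o2 ne(1) ne(1) ne(1) ne(2)] obtain n a b
    where ab: "a \<in> V1" "b \<in> V1" "(T ^^ n) b \<in> V2" by blast
  show False
  proof (cases n)
    case 0
    then have "b \<in> V1 \<inter> V2" using ab by auto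
    then have "dist z b < e" "dist z' b < e" by (auto simp: V1_def V2_def)
    then have "dist z z' < 2 * e" using dist_triangle2[of z z' b] by linarith
    then show False by (simp add: e_def)
  next
    case (Suc k)
    have "(T ^^ n) b = T ((T ^^ k) b)" by (simp add: Suc)
    moreover have "(T ^^ k) b \<in> X" using ab(2) iter_in by (auto simp: V1_def)
    ultimately show False using ab(3) by (auto simp: V2_def)
  qed
qed

lemma surj_iter: "(T ^^ n) ` X = X"
proof (induction n)
  case 0 show ?case by simp
next
  case (Suc n)
  have "(T ^^ Suc n) ` X = T ` ((T ^^ n) ` X)" by (simp add: image_comp)
  then show ?case using Suc surj by simp
qed

lemma N_large:
  assumes "openin (top_of_set X) U" "openin (top_of_set X) V" "U \<noteq> {}" "V \<noteq> {}"
  shows "\<exists>n\<ge>k. \<exists>y\<in>U. (T ^^ n) y \<in> V"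
proof -
  have o: "openin (top_of_set X) (X \<inter> (T ^^ k) -` V)" by (rule open_pre[OF assms(2)])
  have VX: "V \<subseteq> X" using openin_imp_subset[OF assms(2)] .
  obtain v where v: "v \<in> V" using assms(4) by auto
  then have "v \<in> (T ^^ k) ` X" using VX surj_iter[of k] by auto
  then obtain y where "y \<in> X" "(T ^^ k) y = v" by auto
  then have ne: "X \<inter> (T ^^ k) -` V \<noteq> {}" using v by auto
  have oX: "openin (top_of_set X) X" by simp
  from wm_pairs[OF assms(1) oX o oX assms(3) Xne ne Xne] obtain n y
    where "y \<in> U" "(T ^^ n) y \<in> X \<inter> (T ^^ k) -` V" by blast
  then have "(T ^^ (k + n)) y \<in> V" by (simp add: funpow_add)
  then show ?thesis using \<open>y \<in> U\<close> by (metis le_add1)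
qed

lemma furst:
  assumes "openin (top_of_set X) U1" "openin (top_of_set X) U2"
    "openin (top_of_set X) V1" "openin (top_of_set X) V2"
    "U1 \<noteq> {}" "U2 \<noteq> {}" "V1 \<noteq> {}" "V2 \<noteq> {}"
  shows "\<exists>U V. openin (top_of_set X) U \<and> openin (top_of_set X) V \<and> U \<noteq> {} \<and> V \<noteq> {} \<and>
     (\<forall>n y. y \<in> U \<and> (T ^^ n) y \<in> V \<longrightarrow> (\<exists>a\<in>U1. (T ^^ n) a \<in> V1) \<and> (\<exists>b\<in>U2. (T ^^ n) b \<in> V2))"
proof -
  from wm_pairs[OF assms(1) assms(3) assms(2) assms(4) assms(5) assms(7) assms(6) assms(8)]
  obtain m a b where ab: "a \<in> U1" "b \<in> V1" "(T ^^ m) a \<in> U2" "(T ^^ m) b \<in> V2" by blast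
  have sub: "U1 \<subseteq> X" "V1 \<subseteq> X" using assms(1,3) by (auto dest: openin_imp_subset)
  define U where "U = U1 \<inter> (X \<inter> (T ^^ m) -` U2)"
  define V where "V = V1 \<inter> (X \<inter> (T ^^ m) -` V2)"
  have "openin (top_of_set X) U" unfolding U_def using assms open_pre by blast
  moreover have "openin (top_of_set X) V" unfolding V_def using assms open_pre by blast
  moreover have "U \<noteq> {}" "V \<noteq> {}" using ab sub by (auto simp: U_def V_def)
  moreover have "\<forall>n y. y \<in> U \<and> (T ^^ n) y \<in> V \<longrightarrow> (\<exists>a\<in>U1. (T ^^ n) a \<in> V1) \<and> (\<exists>b\<in>U2. (T ^^ n) b \<in> V2)"
  proof (intro allI impI)
    fix n y assume h: "y \<in> U \<and> (T ^^ n) y \<in> V"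
    then have "(T ^^ n) ((T ^^ m) y) \<in> V2" by (simp add: V_def funpow_comm)
    then show "(\<exists>a\<in>U1. (T ^^ n) a \<in> V1) \<and> (\<exists>b\<in>U2. (T ^^ n) b \<in> V2)"
      using h by (auto simp: U_def V_def)
  qed
  ultimately show ?thesis by blast
qed

lemma multi:
  fixes d :: nat and U V :: "nat \<Rightarrow> 'a set"
  assumes "\<forall>i<d. openin (top_of_set X) (U i) \<and> openin (top_of_set X) (V i) \<and> U i \<noteq> {} \<and> V i \<noteq> {}"
  shows "\<exists>U0 V0. openin (top_of_set X) U0 \<and> openin (top_of_set X) V0 \<and> U0 \<noteq> {} \<and> V0 \<noteq> {} \<and>
     (\<forall>n y. y \<in> U0 \<and> (T ^^ n) y \<in> V0 \<longrightarrow> (\<forall>i<d. \<exists>a\<in>U i. (T ^^ n) a \<in> V i))"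
  using assms
proof (induction d)
  case 0
  then show ?case using Xne by (intro exI[of _ X]) auto
next
  case (Suc d)
  then obtain U0 V0 where U0: "openin (top_of_set X) U0" "openin (top_of_set X) V0" "U0 \<noteq> {}" "V0 \<noteq> {}"
     "\<forall>n y. y \<in> U0 \<and> (T ^^ n) y \<in> V0 \<longrightarrow> (\<forall>i<d. \<exists>a\<in>U i. (T ^^ n) a \<in> V i)" by auto
  have "openin (top_of_set X) (U d)" "openin (top_of_set X) (V d)" "U d \<noteq> {}" "V d \<noteq> {}"
    using Suc.prems by auto
  from furst[OF U0(1) this(1) U0(2) this(2) U0(3) this(3) U0(4) this(4)] obtain U' V' where
    "openin (top_of_set X) U'" "openin (top_of_set X) V'" "U' \<noteq> {}" "V' \<noteq> {}"
     "\<forall>n y. y \<in> U' \<and> (T ^^ n) y \<in> V' \<longrightarrow> (\<exists>a\<in>U0. (T ^^ n) a \<in> V0) \<and> (\<exists>b\<in>U d. (T ^^ n) b \<in> V d)"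
    by blast
  then show ?case using U0(5) by (intro exI[of _ U'] exI[of _ V']) (metis less_Suc_eq)
qed

lemma MTs:
  fixes d :: nat and U :: "nat \<Rightarrow> 'a set" and q :: "nat \<Rightarrow> 'a" and s :: "nat \<Rightarrow> nat"
  assumes "\<forall>i<d. openin (top_of_set X) (U i) \<and> U i \<noteq> {} \<and> q i \<in> X" "r > 0"
  shows "\<exists>n\<ge>k. \<forall>i<d. \<exists>a\<in>U i. (T ^^ n) ((T ^^ s i) a) \<in> ball (q i) r"
proof -
  define V where "V i = X \<inter> (T ^^ s i) -` ball (q i) r" for i
  have "\<forall>i<d. openin (top_of_set X) (V i) \<and> V i \<noteq> {}"
  proof (intro allI impI conjI)
    fix i assume i: "i < d"
    show "openin (top_of_set X) (V i)" unfolding V_def by (rule open_pre_ball)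
    have "q i \<in> (T ^^ s i) ` X" using assms i surj_iter by auto
    then show "V i \<noteq> {}" using assms(2) by (force simp: V_def)
  qed
  with assms(1) obtain U0 V0 where U0: "openin (top_of_set X) U0" "openin (top_of_set X) V0" "U0 \<noteq> {}" "V0 \<noteq> {}"
     "\<forall>n y. y \<in> U0 \<and> (T ^^ n) y \<in> V0 \<longrightarrow> (\<forall>i<d. \<exists>a\<in>U i. (T ^^ n) a \<in> V i)"
    using multi[of d U V] by auto
  from N_large[OF U0(1-4)] obtain n y where "n \<ge> k" "y \<in> U0" "(T ^^ n) y \<in> V0" by blast
  with U0(5) have "\<forall>i<d. \<exists>a\<in>U i. (T ^^ n) a \<in> V i" by blast
  then have "\<forall>i<d. \<exists>a\<in>U i. (T ^^ n) ((T ^^ s i) a) \<in> ball (q i) r"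
    by (auto simp: V_def funpow_comm)
  then show ?thesis using \<open>n \<ge> k\<close> by blast
qed

end



lemma shrink_all:
  fixes R :: "'r set" and gd :: "('w \<Rightarrow> 'b set) \<Rightarrow> bool"
  assumes ach: "\<And>\<rho> \<sigma>. \<rho> \<in> R \<Longrightarrow> gd \<sigma> \<Longrightarrow> \<exists>\<sigma>'. \<sigma>' \<le> \<sigma> \<and> gd \<sigma>' \<and> P \<rho> \<sigma>'"
    and mono: "\<And>\<rho> \<sigma> \<sigma>'. \<rho> \<in> R \<Longrightarrow> \<sigma>' \<le> \<sigma> \<Longrightarrow> P \<rho> \<sigma> \<Longrightarrow> P \<rho> \<sigma>'"
  shows "finite S \<Longrightarrow> S \<subseteq> R \<Longrightarrow> gd \<sigma> \<Longrightarrow> \<exists>\<sigma>'. \<sigma>' \<le> \<sigma> \<and> gd \<sigma>' \<and> (\<forall>\<rho>\<in>S. P \<rho> \<sigma>')"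
proof (induction S arbitrary: \<sigma> rule: finite_induct)
  case empty
  then show ?case by auto
next
  case (insert \<rho> S)
  have SR: "S \<subseteq> R" using insert.prems(1) by auto
  obtain \<sigma>1 where s1: "\<sigma>1 \<le> \<sigma>" "gd \<sigma>1" "\<forall>\<rho>'\<in>S. P \<rho>' \<sigma>1"
    using insert.IH[OF SR insert.prems(2)] by blast
  from ach[OF _ s1(2)] insert.prems obtain \<sigma>2 where s2: "\<sigma>2 \<le> \<sigma>1" "gd \<sigma>2" "P \<rho> \<sigma>2" by auto
  have "\<forall>\<rho>'\<in>S. P \<rho>' \<sigma>2" using s1(3) s2(1) mono insert.prems by auto
  moreover have "\<sigma>2 \<le> \<sigma>" using s1(1) s2(1) by (rule order_trans[rotated])
  ultimately show ?case using s2 by auto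
qed

context wmsys begin

definition Wd :: "nat \<Rightarrow> bool list set" where "Wd m = {w. length w = m}"

lemma finite_Wd: "finite (Wd m)"
  using finite_lists_length_eq[of "UNIV :: bool set" m] by (simp add: Wd_def)

definition good :: "nat \<Rightarrow> (bool list \<Rightarrow> 'a set) \<Rightarrow> bool" where
  "good m \<sigma> \<longleftrightarrow> (\<forall>v\<in>Wd m. openin (top_of_set X) (\<sigma> v) \<and> \<sigma> v \<noteq> {})"

lemma achieve:
  fixes d :: nat and vs :: "nat \<Rightarrow> bool list" and q :: "nat \<Rightarrow> 'a" and s :: "nat \<Rightarrow> nat"
  assumes g: "good m \<sigma>" and vs: "\<forall>i<d. vs i \<in> Wd m" and inj: "inj_on vs {..<d}"
    and q: "\<forall>i<d. q i \<in> X" and r: "r > 0"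
  shows "\<exists>\<sigma>'. \<sigma>' \<le> \<sigma> \<and> good m \<sigma>' \<and> (\<exists>n\<ge>k. \<forall>i<d. \<forall>y\<in>\<sigma>' (vs i). (T ^^ n) ((T ^^ s i) y) \<in> ball (q i) r)"
proof -
  have "\<forall>i<d. openin (top_of_set X) (\<sigma> (vs i)) \<and> \<sigma> (vs i) \<noteq> {} \<and> q i \<in> X"
    using g vs q by (simp add: good_def)
  from MTs[OF this r, of k s] obtain n where n: "n \<ge> k"
     "\<forall>i<d. \<exists>a\<in>\<sigma> (vs i). (T ^^ n) ((T ^^ s i) a) \<in> ball (q i) r" by blast
  define P where "P i = X \<inter> (T ^^ (n + s i)) -` ball (q i) r" for i
  define \<sigma>' where "\<sigma>' v = (if v \<in> vs ` {..<d} then \<sigma> v \<inter> P (inv_into {..<d} vs v) else \<sigma> v)" for v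
  have inv: "i < d \<Longrightarrow> inv_into {..<d} vs (vs i) = i" for i using inj by (simp add: inv_into_f_f)
  have "\<sigma>' \<le> \<sigma>" by (auto simp: \<sigma>'_def le_fun_def)
  moreover have "good m \<sigma>'"
    unfolding good_def
  proof
    fix v assume v: "v \<in> Wd m"
    have ov: "openin (top_of_set X) (\<sigma> v)" "\<sigma> v \<noteq> {}" using g v by (auto simp: good_def)
    show "openin (top_of_set X) (\<sigma>' v) \<and> \<sigma>' v \<noteq> {}"
    proof (cases "v \<in> vs ` {..<d}")
      case True
      then obtain i where i: "i < d" "v = vs i" by auto
      have e: "\<sigma>' v = \<sigma> v \<inter> P i" using True i inv by (simp add: \<sigma>'_def)
      have op: "openin (top_of_set X) (P i)" unfolding P_def by (rule open_pre_ball)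
      obtain a where a: "a \<in> \<sigma> (vs i)" "(T ^^ n) ((T ^^ s i) a) \<in> ball (q i) r" using n i by blast
      have "a \<in> X" using a(1) ov(1) i(2) openin_imp_subset by blast
      then have "a \<in> \<sigma> v \<inter> P i" using a i by (simp add: P_def funpow_add)
      then show ?thesis using e ov op by auto
    next
      case False then show ?thesis using ov by (simp add: \<sigma>'_def)
    qed
  qed
  moreover have "\<forall>i<d. \<forall>y\<in>\<sigma>' (vs i). (T ^^ n) ((T ^^ s i) y) \<in> ball (q i) r"
    using inv by (auto simp: \<sigma>'_def P_def funpow_add)
  ultimately show ?thesis using n(1) by blast
qed

lemma infX: "infinite X"
proof
  assume "finite X"
  obtain x where "x \<in> X" using Xne by auto
  then show False using perfect islimpt_finite[OF \<open>finite X\<close>] by blast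
qed

definition pt :: "nat \<Rightarrow> 'a" where "pt = (SOME f. inj f \<and> range f \<subseteq> X)"

lemma pt: "inj pt" "pt i \<in> X"
proof -
  have "inj pt \<and> range pt \<subseteq> X"
    unfolding pt_def by (rule someI_ex[OF infinite_countable_subset[OF infX]])
  then show "inj pt" "pt i \<in> X" by auto
qed

lemma fin_pairs: fixes d :: nat shows "finite {f i j |i j. i < d \<and> j < d \<and> P i j}"
  by (rule finite_subset[of _ "(\<lambda>(i,j). f i j) ` ({..<d} \<times> {..<d})"]) (auto intro!: finite_imageI finite_cartesian_product finite_lessThan)

definition DD :: "nat \<Rightarrow> real" where "DD d = Min {dist (pt i) (pt j) |i j. i < d \<and> j < d \<and> i \<noteq> j}"

lemma DD_le: "i < d \<Longrightarrow> j < d \<Longrightarrow> i \<noteq> j \<Longrightarrow> DD d \<le> dist (pt i) (pt j)"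
  unfolding DD_def by (rule Min_le[OF fin_pairs]) auto

lemma DD_pos: assumes "2 \<le> d" shows "0 < DD d"
proof -
  have ne: "dist (pt 0) (pt 1) \<in> {dist (pt i) (pt j) |i j. i < d \<and> j < d \<and> i \<noteq> j}"
    using assms by (intro CollectI exI[of _ 0] exI[of _ 1]) auto
  have "\<forall>a\<in>{dist (pt i) (pt j) |i j. i < d \<and> j < d \<and> i \<noteq> j}. 0 < a"
  proof
    fix a assume "a \<in> {dist (pt i) (pt j) |i j. i < d \<and> j < d \<and> i \<noteq> j}"
    then obtain i j where "a = dist (pt i) (pt j)" "i \<noteq> j" by blast
    moreover have "pt i \<noteq> pt j" using \<open>i \<noteq> j\<close> pt(1) by (simp add: inj_eq)
    ultimately show "0 < a" by simp
  qed
  then show ?thesis unfolding DD_def using ne by (subst Min_gr_iff[OF fin_pairs]) auto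
qed

definition dl :: "nat \<Rightarrow> real" where "dl d = min (1/2) (DD d / 4)"

definition net :: "nat \<Rightarrow> 'a set" where
  "net m = (SOME k. finite k \<and> k \<subseteq> X \<and> X \<subseteq> (\<Union>x\<in>k. ball x (1 / (real m + 1))))"

lemma net: "finite (net m)" "net m \<subseteq> X" "X \<subseteq> (\<Union>x\<in>net m. ball x (1 / (real m + 1)))"
proof -
  have "\<exists>k. finite k \<and> k \<subseteq> X \<and> X \<subseteq> (\<Union>x\<in>k. ball x (1 / (real m + 1)))"
    using seq_compact_imp_totally_bounded[OF compact_imp_seq_compact[OF cX]]
    by (metis divide_pos_pos of_nat_less_0_iff not_less zero_less_one add_pos_nonneg zero_le_one of_nat_0_le_iff
        add_nonneg_pos)
  then have "finite (net m) \<and> net m \<subseteq> X \<and> X \<subseteq> (\<Union>x\<in>net m. ball x (1 / (real m + 1)))"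
    unfolding net_def by (rule someI_ex)
  then show "finite (net m)" "net m \<subseteq> X" "X \<subseteq> (\<Union>x\<in>net m. ball x (1 / (real m + 1)))" by auto
qed

definition IS :: "nat \<Rightarrow> (nat \<times> bool list list \<times> nat list) set" where
  "IS m = {(d, vl, sl). 2 \<le> d \<and> d \<le> m \<and> length vl = d \<and> length sl = d \<and> set vl \<subseteq> Wd m \<and>
      set sl \<subseteq> {..m} \<and> distinct vl}"

lemma finite_IS: "finite (IS m)"
proof -
  have "IS m \<subseteq> {..m} \<times> {xs. set xs \<subseteq> Wd m \<and> length xs \<le> m} \<times> {xs. set xs \<subseteq> {..m} \<and> length xs \<le> m}"
    by (auto simp: IS_def)
  moreover have "finite ({..m} \<times> {xs. set xs \<subseteq> Wd m \<and> length xs \<le> m} \<times> {xs. set xs \<subseteq> {..m} \<and> length xs \<le> m})"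
    by (intro finite_cartesian_product finite_atMost finite_lists_length_le finite_Wd)
  ultimately show ?thesis by (rule finite_subset)
qed

definition IO :: "nat \<Rightarrow> (bool list \<times> 'a) set" where "IO m = Wd m \<times> net m"

lemma finite_IO: "finite (IO m)" by (simp add: IO_def finite_Wd net(1))

definition eps :: "nat \<Rightarrow> real" where "eps m = 1 / (2 * (real m + 1))"

lemma eps_pos: "eps m > 0" by (simp add: eps_def)

definition RS :: "nat \<Rightarrow> (nat \<times> bool list list \<times> nat list) \<Rightarrow> (bool list \<Rightarrow> 'a set) \<Rightarrow> bool" where
  "RS m \<rho> \<sigma> \<longleftrightarrow> (case \<rho> of (d, vl, sl) \<Rightarrow>
     \<exists>n\<ge>m. \<exists>q. \<forall>i<d. \<forall>y\<in>\<sigma> (vl ! i). (T ^^ n) ((T ^^ (sl ! i)) y) \<in> ball q (eps m))"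

definition RB :: "nat \<Rightarrow> (nat \<times> bool list list \<times> nat list) \<Rightarrow> (bool list \<Rightarrow> 'a set) \<Rightarrow> bool" where
  "RB m \<rho> \<sigma> \<longleftrightarrow> (case \<rho> of (d, vl, sl) \<Rightarrow>
     \<exists>n\<ge>m. \<forall>i<d. \<forall>y\<in>\<sigma> (vl ! i). (T ^^ n) ((T ^^ (sl ! i)) y) \<in> ball (pt i) (DD d / 8))"

definition RO :: "nat \<Rightarrow> (bool list \<times> 'a) \<Rightarrow> (bool list \<Rightarrow> 'a set) \<Rightarrow> bool" where
  "RO m \<rho> \<sigma> \<longleftrightarrow> (case \<rho> of (w, q) \<Rightarrow> \<exists>n\<ge>m. \<forall>y\<in>\<sigma> w. (T ^^ n) y \<in> ball q (1 / (real m + 1)))"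

lemma IS_nth: "(d, vl, sl) \<in> IS m \<Longrightarrow> i < d \<Longrightarrow> vl ! i \<in> Wd m"
  unfolding IS_def by (auto dest: nth_mem)

lemma RS_mono: assumes "\<rho> \<in> IS m" "\<forall>v\<in>Wd m. \<sigma>' v \<subseteq> \<sigma> v" "RS m \<rho> \<sigma>" shows "RS m \<rho> \<sigma>'"
proof -
  obtain d vl sl where r: "\<rho> = (d, vl, sl)" by (cases \<rho>)
  from assms(3) obtain n q where n: "n \<ge> m" "\<forall>i<d. \<forall>y\<in>\<sigma> (vl ! i). (T ^^ n) ((T ^^ (sl ! i)) y) \<in> ball q (eps m)"
    by (auto simp: RS_def r)
  have "\<forall>i<d. \<sigma>' (vl ! i) \<subseteq> \<sigma> (vl ! i)" using assms(1,2) IS_nth r by blast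
  then have "\<forall>i<d. \<forall>y\<in>\<sigma>' (vl ! i). (T ^^ n) ((T ^^ (sl ! i)) y) \<in> ball q (eps m)" using n(2) by blast
  then show ?thesis using n(1) by (auto simp: RS_def r)
qed

lemma RB_mono: assumes "\<rho> \<in> IS m" "\<forall>v\<in>Wd m. \<sigma>' v \<subseteq> \<sigma> v" "RB m \<rho> \<sigma>" shows "RB m \<rho> \<sigma>'"
proof -
  obtain d vl sl where r: "\<rho> = (d, vl, sl)" by (cases \<rho>)
  from assms(3) obtain n where n: "n \<ge> m" "\<forall>i<d. \<forall>y\<in>\<sigma> (vl ! i). (T ^^ n) ((T ^^ (sl ! i)) y) \<in> ball (pt i) (DD d / 8)"
    by (auto simp: RB_def r)
  have "\<forall>i<d. \<sigma>' (vl ! i) \<subseteq> \<sigma> (vl ! i)" using assms(1,2) IS_nth r by blast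
  then have "\<forall>i<d. \<forall>y\<in>\<sigma>' (vl ! i). (T ^^ n) ((T ^^ (sl ! i)) y) \<in> ball (pt i) (DD d / 8)" using n(2) by blast
  then show ?thesis using n(1) by (auto simp: RB_def r)
qed

lemma RO_mono: assumes "\<rho> \<in> IO m" "\<forall>v\<in>Wd m. \<sigma>' v \<subseteq> \<sigma> v" "RO m \<rho> \<sigma>" shows "RO m \<rho> \<sigma>'"
proof -
  obtain w q where r: "\<rho> = (w, q)" by (cases \<rho>)
  from assms(3) obtain n where n: "n \<ge> m" "\<forall>y\<in>\<sigma> w. (T ^^ n) y \<in> ball q (1 / (real m + 1))"
    by (auto simp: RO_def r)
  have "\<sigma>' w \<subseteq> \<sigma> w" using assms(1,2) r by (auto simp: IO_def)
  then show ?thesis using n by (auto simp: RO_def r)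
qed

lemma RS_ach: assumes "\<rho> \<in> IS m" "good m \<sigma>" shows "\<exists>\<sigma>'. \<sigma>' \<le> \<sigma> \<and> good m \<sigma>' \<and> RS m \<rho> \<sigma>'"
proof -
  obtain d vl sl where r: "\<rho> = (d, vl, sl)" by (cases \<rho>)
  obtain x0 where x0: "x0 \<in> X" using Xne by auto
  have vs: "\<forall>i<d. vl ! i \<in> Wd m" using assms(1) IS_nth r by blast
  have inj: "inj_on ((!) vl) {..<d}" using assms(1) r by (intro inj_on_nth) (auto simp: IS_def)
  from achieve[OF assms(2) vs inj, of "\<lambda>_. x0" "eps m" m "(!) sl"] x0 eps_pos
  obtain \<sigma>' where "\<sigma>' \<le> \<sigma>" "good m \<sigma>'"
    "\<exists>n\<ge>m. \<forall>i<d. \<forall>y\<in>\<sigma>' (vl ! i). (T ^^ n) ((T ^^ (sl ! i)) y) \<in> ball x0 (eps m)" by blast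
  then show ?thesis by (auto simp: RS_def r)
qed

lemma RB_ach: assumes "\<rho> \<in> IS m" "good m \<sigma>" shows "\<exists>\<sigma>'. \<sigma>' \<le> \<sigma> \<and> good m \<sigma>' \<and> RB m \<rho> \<sigma>'"
proof -
  obtain d vl sl where r: "\<rho> = (d, vl, sl)" by (cases \<rho>)
  have d2: "2 \<le> d" using assms(1) r by (simp add: IS_def)
  have vs: "\<forall>i<d. vl ! i \<in> Wd m" using assms(1) IS_nth r by blast
  have inj: "inj_on ((!) vl) {..<d}" using assms(1) r by (intro inj_on_nth) (auto simp: IS_def)
  have pos: "DD d / 8 > 0" using DD_pos[OF d2] by simp
  from achieve[OF assms(2) vs inj, of pt "DD d / 8" m "(!) sl"] pt(2) pos
  obtain \<sigma>' where "\<sigma>' \<le> \<sigma>" "good m \<sigma>'"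
    "\<exists>n\<ge>m. \<forall>i<d. \<forall>y\<in>\<sigma>' (vl ! i). (T ^^ n) ((T ^^ (sl ! i)) y) \<in> ball (pt i) (DD d / 8)" by blast
  then show ?thesis by (auto simp: RB_def r)
qed

lemma RO_ach: assumes "\<rho> \<in> IO m" "good m \<sigma>" shows "\<exists>\<sigma>'. \<sigma>' \<le> \<sigma> \<and> good m \<sigma>' \<and> RO m \<rho> \<sigma>'"
proof -
  obtain w q where r: "\<rho> = (w, q)" by (cases \<rho>)
  have w: "\<forall>i<(1::nat). (\<lambda>_. w) i \<in> Wd m" using assms(1) r by (simp add: IO_def)
  have q: "\<forall>i<(1::nat). (\<lambda>_. q) i \<in> X" using assms(1) r net(2) by (auto simp: IO_def)
  have inj: "inj_on (\<lambda>_::nat. w) {..<1}" by (auto simp: inj_on_def)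
  have pos: "1 / (real m + 1) > 0" by simp
  from achieve[OF assms(2) w inj q pos, of m "\<lambda>_. 0"]
  obtain \<sigma>' where "\<sigma>' \<le> \<sigma>" "good m \<sigma>'"
    "\<exists>n\<ge>m. \<forall>y\<in>\<sigma>' w. (T ^^ n) y \<in> ball q (1 / (real m + 1))" by auto
  then show ?thesis by (auto simp: RO_def r)
qed

lemma shrink_reqs:
  assumes "good m \<sigma>"
  shows "\<exists>\<sigma>'. \<sigma>' \<le> \<sigma> \<and> good m \<sigma>' \<and> (\<forall>\<rho>\<in>IS m. RS m \<rho> \<sigma>') \<and> (\<forall>\<rho>\<in>IS m. RB m \<rho> \<sigma>') \<and> (\<forall>\<rho>\<in>IO m. RO m \<rho> \<sigma>')"
proof -
  have mS: "\<And>\<rho> \<sigma> \<sigma>'. \<rho> \<in> IS m \<Longrightarrow> \<sigma>' \<le> \<sigma> \<Longrightarrow> RS m \<rho> \<sigma> \<Longrightarrow> RS m \<rho> \<sigma>'"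
    by (rule RS_mono) (auto simp: le_fun_def)
  have mB: "\<And>\<rho> \<sigma> \<sigma>'. \<rho> \<in> IS m \<Longrightarrow> \<sigma>' \<le> \<sigma> \<Longrightarrow> RB m \<rho> \<sigma> \<Longrightarrow> RB m \<rho> \<sigma>'"
    by (rule RB_mono) (auto simp: le_fun_def)
  have mO: "\<And>\<rho> \<sigma> \<sigma>'. \<rho> \<in> IO m \<Longrightarrow> \<sigma>' \<le> \<sigma> \<Longrightarrow> RO m \<rho> \<sigma> \<Longrightarrow> RO m \<rho> \<sigma>'"
    by (rule RO_mono) (auto simp: le_fun_def)
  have "\<exists>\<sigma>'. \<sigma>' \<le> \<sigma> \<and> good m \<sigma>' \<and> (\<forall>\<rho>\<in>IS m. RS m \<rho> \<sigma>')"
    apply (rule shrink_all[where R="IS m" and gd="good m" and P="RS m"])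
        apply (metis RS_ach)
       apply (metis mS)
      apply (rule finite_IS)
     apply simp
    apply (rule assms)
    done
  then obtain \<sigma>1 where s1: "\<sigma>1 \<le> \<sigma>" "good m \<sigma>1" "\<forall>\<rho>\<in>IS m. RS m \<rho> \<sigma>1"
    by blast
  have "\<exists>\<sigma>'. \<sigma>' \<le> \<sigma>1 \<and> good m \<sigma>' \<and> (\<forall>\<rho>\<in>IS m. RB m \<rho> \<sigma>')"
    apply (rule shrink_all[where R="IS m" and gd="good m" and P="RB m"])
        apply (metis RB_ach)
       apply (metis mB)
      apply (rule finite_IS)
     apply simp
    apply (rule s1(2))
    done
  then obtain \<sigma>2 where s2: "\<sigma>2 \<le> \<sigma>1" "good m \<sigma>2" "\<forall>\<rho>\<in>IS m. RB m \<rho> \<sigma>2"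
    by blast
  have "\<exists>\<sigma>'. \<sigma>' \<le> \<sigma>2 \<and> good m \<sigma>' \<and> (\<forall>\<rho>\<in>IO m. RO m \<rho> \<sigma>')"
    apply (rule shrink_all[where R="IO m" and gd="good m" and P="RO m"])
        apply (metis RO_ach)
       apply (metis mO)
      apply (rule finite_IO)
     apply simp
    apply (rule s2(2))
    done
  then obtain \<sigma>3 where s3: "\<sigma>3 \<le> \<sigma>2" "good m \<sigma>3" "\<forall>\<rho>\<in>IO m. RO m \<rho> \<sigma>3"
    by blast
  have "\<sigma>3 \<le> \<sigma>" using s1(1) s2(1) s3(1) by (meson order_trans)
  moreover have "\<forall>\<rho>\<in>IS m. RS m \<rho> \<sigma>3" using s1(3) s2(1) s3(1) mS by (meson order_trans)
  moreover have "\<forall>\<rho>\<in>IS m. RB m \<rho> \<sigma>3" using s2(3) s3(1) mB by blast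
  ultimately show ?thesis using s3 by blast
qed

definition Inv :: "nat \<Rightarrow> (bool list \<Rightarrow> 'a) \<Rightarrow> (bool list \<Rightarrow> real) \<Rightarrow> bool" where
  "Inv m c r \<longleftrightarrow> (\<forall>w\<in>Wd m. c w \<in> X \<and> 0 < r w \<and> r w \<le> 1 / (real m + 1)) \<and>
    (\<forall>w\<in>Wd m. \<forall>w'\<in>Wd m. w \<noteq> w' \<longrightarrow> cball (c w) (r w) \<inter> cball (c w') (r w') = {})"

definition Reqs :: "nat \<Rightarrow> (bool list \<Rightarrow> 'a set) \<Rightarrow> bool" where
  "Reqs m \<sigma> \<longleftrightarrow> (\<forall>\<rho>\<in>IS m. RS m \<rho> \<sigma>) \<and> (\<forall>\<rho>\<in>IS m. RB m \<rho> \<sigma>) \<and> (\<forall>\<rho>\<in>IO m. RO m \<rho> \<sigma>)"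

lemma Reqs_mono: "Reqs m \<sigma> \<Longrightarrow> \<forall>v\<in>Wd m. \<sigma>' v \<subseteq> \<sigma> v \<Longrightarrow> Reqs m \<sigma>'"
  unfolding Reqs_def by (meson RS_mono RB_mono RO_mono)

lemma split_pt:
  assumes "w \<in> Wd m" "Inv m c r"
  shows "\<exists>a e. a \<in> X \<and> 0 < e \<and> ball (c w) e \<subseteq> ball (c w) (r w) \<and> ball a e \<subseteq> ball (c w) (r w) \<and>
    ball (c w) e \<inter> ball a e = {}"
proof -
  have cw: "c w \<in> X" "0 < r w" using assms by (auto simp: Inv_def)
  obtain a where a: "a \<in> X" "a \<noteq> c w" "dist a (c w) < r w"
    using perfect[OF cw(1)] cw(2) unfolding islimpt_approachable by blast
  define e where "e = min (dist a (c w) / 3) (r w - dist a (c w))"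
  have dpos: "dist a (c w) > 0" using a(2) by simp
  have e: "0 < e" using a dpos by (simp add: e_def)
  have e1: "e \<le> dist a (c w) / 3" "e \<le> r w - dist a (c w)"
    unfolding e_def by (rule min.cobounded1, rule min.cobounded2)
  have 1: "ball (c w) e \<subseteq> ball (c w) (r w)" by (rule subset_ball) (use e1 dpos in linarith)
  have 2: "ball a e \<subseteq> ball (c w) (r w)"
  proof
    fix y assume "y \<in> ball a e"
    then have "dist a y < e" by simp
    moreover have "dist (c w) y \<le> dist (c w) a + dist a y" by (rule dist_triangle)
    moreover have "dist (c w) a = dist a (c w)" by (rule dist_commute)
    ultimately show "y \<in> ball (c w) (r w)" using e1 by simp
  qed
  have 3: "ball (c w) e \<inter> ball a e = {}"
  proof (rule ccontr)
    assume "ball (c w) e \<inter> ball a e \<noteq> {}"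
    then obtain y where y: "dist (c w) y < e" "dist a y < e" by auto
    have "dist a (c w) \<le> dist a y + dist (c w) y" by (rule dist_triangle2)
    then show False using y e1 dpos by linarith
  qed
  show ?thesis using a e 1 2 3 by blast
qed

lemma step:
  assumes inv: "Inv m c r"
  shows "\<exists>c' r'. Inv (Suc m) c' r' \<and>
    (\<forall>v\<in>Wd (Suc m). cball (c' v) (r' v) \<subseteq> cball (c (butlast v)) (r (butlast v))) \<and>
    Reqs (Suc m) (\<lambda>v. cball (c' v) (r' v) \<inter> X)"
proof -
  have "\<forall>w\<in>Wd m. \<exists>a e. a \<in> X \<and> 0 < e \<and> ball (c w) e \<subseteq> ball (c w) (r w) \<and> ball a e \<subseteq> ball (c w) (r w) \<and>
    ball (c w) e \<inter> ball a e = {}" using split_pt inv by blast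
  then obtain A E where AE: "\<And>w. w \<in> Wd m \<Longrightarrow> A w \<in> X \<and> 0 < E w \<and> ball (c w) (E w) \<subseteq> ball (c w) (r w) \<and>
     ball (A w) (E w) \<subseteq> ball (c w) (r w) \<and> ball (c w) (E w) \<inter> ball (A w) (E w) = {}"
    by metis
  have cX: "w \<in> Wd m \<Longrightarrow> c w \<in> X" for w using inv by (simp add: Inv_def)
  define ch where "ch w b = (if b then A w else c w)" for w b
  define B where "B v = ball (ch (butlast v) (last v)) (E (butlast v))" for v
  define \<sigma>0 where "\<sigma>0 v = X \<inter> B v" for v
  have bw: "v \<in> Wd (Suc m) \<Longrightarrow> butlast v \<in> Wd m" for v by (simp add: Wd_def)
  have B_sub: "B v \<subseteq> ball (c (butlast v)) (r (butlast v))" if v: "v \<in> Wd (Suc m)" for v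
  proof -
    note h = AE[OF bw[OF v]]
    show ?thesis by (cases "last v") (simp_all add: B_def ch_def h)
  qed
  have cen: "ch (butlast v) (last v) \<in> X \<and> ch (butlast v) (last v) \<in> B v" if v: "v \<in> Wd (Suc m)" for v
  proof -
    note h = AE[OF bw[OF v]]
    show ?thesis using h cX[OF bw[OF v]] by (simp add: B_def ch_def)
  qed
  have B_disj: "B v \<inter> B v' = {}" if v: "v \<in> Wd (Suc m)" and v': "v' \<in> Wd (Suc m)" and ne: "v \<noteq> v'" for v v'
  proof (cases "butlast v = butlast v'")
    case True
    have nn: "v \<noteq> []" "v' \<noteq> []" using v v' by (auto simp: Wd_def)
    have "last v \<noteq> last v'"
    proof
      assume "last v = last v'"
      then have "butlast v @ [last v] = butlast v' @ [last v']" using True by simp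
      then show False using ne nn by (simp add: append_butlast_last_id)
    qed
    note h = AE[OF bw[OF v]]
    show ?thesis
    proof (cases "last v")
      case True
      then have "\<not> last v'" using \<open>last v \<noteq> last v'\<close> by simp
      then show ?thesis using True \<open>butlast v = butlast v'\<close> h by (auto simp: B_def ch_def)
    next
      case False
      then have "last v'" using \<open>last v \<noteq> last v'\<close> by simp
      then show ?thesis using False \<open>butlast v = butlast v'\<close> h by (auto simp: B_def ch_def)
    qed
  next
    case False
    have d: "cball (c (butlast v)) (r (butlast v)) \<inter> cball (c (butlast v')) (r (butlast v')) = {}"
      using inv bw[OF v] bw[OF v'] False by (simp add: Inv_def)
    have "B v \<subseteq> cball (c (butlast v)) (r (butlast v))" using B_sub[OF v] ball_subset_cball by blast
    moreover have "B v' \<subseteq> cball (c (butlast v')) (r (butlast v'))" using B_sub[OF v'] ball_subset_cball by blast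
    ultimately show ?thesis using d by blast
  qed
  have g0: "good (Suc m) \<sigma>0"
    unfolding good_def
  proof
    fix v assume v: "v \<in> Wd (Suc m)"
    have "openin (top_of_set X) (X \<inter> B v)" by (rule openin_open_Int) (simp add: B_def)
    moreover have "\<sigma>0 v \<noteq> {}" using cen[OF v] by (auto simp: \<sigma>0_def)
    ultimately show "openin (top_of_set X) (\<sigma>0 v) \<and> \<sigma>0 v \<noteq> {}" by (simp add: \<sigma>0_def)
  qed
  obtain \<sigma> where \<sigma>: "\<sigma> \<le> \<sigma>0" "good (Suc m) \<sigma>" "Reqs (Suc m) \<sigma>"
    using shrink_reqs[OF g0] by (auto simp: Reqs_def)
  have "\<forall>v\<in>Wd (Suc m). \<exists>c1 r1. c1 \<in> X \<and> 0 < r1 \<and> r1 \<le> 1 / (real (Suc m) + 1) \<and>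
      cball c1 r1 \<inter> X \<subseteq> \<sigma> v \<and> cball c1 r1 \<subseteq> B v"
  proof
    fix v assume v: "v \<in> Wd (Suc m)"
    have o: "openin (top_of_set X) (\<sigma> v)" "\<sigma> v \<noteq> {}" using \<sigma>(2) v by (auto simp: good_def)
    obtain c1 where c1: "c1 \<in> \<sigma> v" using o(2) by auto
    have c1X: "c1 \<in> X" using c1 openin_imp_subset[OF o(1)] by blast
    obtain e1 where e1: "e1 > 0" "ball c1 e1 \<inter> X \<subseteq> \<sigma> v"
      using o(1) c1 unfolding openin_contains_ball by blast
    have "c1 \<in> B v" using c1 \<sigma>(1) by (auto simp: \<sigma>0_def le_fun_def)
    then obtain e2 where e2: "e2 > 0" "ball c1 e2 \<subseteq> B v"
      using open_contains_ball_eq[of "B v"] by (auto simp: B_def)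
    define r1 where "r1 = min (min e1 e2 / 2) (1 / (real (Suc m) + 1))"
    have r1: "0 < r1" "r1 < e1" "r1 < e2" "r1 \<le> 1 / (real (Suc m) + 1)"
      using e1(1) e2(1) by (auto simp: r1_def min_def)
    have "cball c1 r1 \<subseteq> ball c1 e1" "cball c1 r1 \<subseteq> ball c1 e2" using r1 by (auto simp: subset_eq)
    then have "cball c1 r1 \<inter> X \<subseteq> \<sigma> v" "cball c1 r1 \<subseteq> B v" using e1(2) e2(2) by blast+
    then show "\<exists>c1 r1. c1 \<in> X \<and> 0 < r1 \<and> r1 \<le> 1 / (real (Suc m) + 1) \<and>
      cball c1 r1 \<inter> X \<subseteq> \<sigma> v \<and> cball c1 r1 \<subseteq> B v" using c1X r1 by blast
  qed
  then obtain C R where CR: "\<And>v. v \<in> Wd (Suc m) \<Longrightarrow> C v \<in> X \<and> 0 < R v \<and> R v \<le> 1 / (real (Suc m) + 1) \<and>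
      cball (C v) (R v) \<inter> X \<subseteq> \<sigma> v \<and> cball (C v) (R v) \<subseteq> B v"
    by metis
  have "Inv (Suc m) C R"
    unfolding Inv_def
  proof (intro conjI ballI impI)
    fix w assume "w \<in> Wd (Suc m)"
    then show "C w \<in> X" "0 < R w" "R w \<le> 1 / (real (Suc m) + 1)" using CR by auto
  next
    fix w w' assume w: "w \<in> Wd (Suc m)" and w': "w' \<in> Wd (Suc m)" and ne: "w \<noteq> w'"
    show "cball (C w) (R w) \<inter> cball (C w') (R w') = {}"
      using CR[OF w] CR[OF w'] B_disj[OF w w' ne] by blast
  qed
  moreover have "\<forall>v\<in>Wd (Suc m). cball (C v) (R v) \<subseteq> cball (c (butlast v)) (r (butlast v))"
  proof
    fix v assume v: "v \<in> Wd (Suc m)"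
    show "cball (C v) (R v) \<subseteq> cball (c (butlast v)) (r (butlast v))"
      using CR[OF v] B_sub[OF v] ball_subset_cball by blast
  qed
  moreover have "Reqs (Suc m) (\<lambda>v. cball (C v) (R v) \<inter> X)"
    using Reqs_mono[OF \<sigma>(3)] CR by auto
  ultimately show ?thesis by blast
qed

lemma scheme:
  "\<exists>c r. \<forall>m. Inv m (c m) (r m) \<and>
    (\<forall>v\<in>Wd (Suc m). cball (c (Suc m) v) (r (Suc m) v) \<subseteq> cball (c m (butlast v)) (r m (butlast v))) \<and>
    Reqs (Suc m) (\<lambda>v. cball (c (Suc m) v) (r (Suc m) v) \<inter> X)"
proof -
  define P where "P m (p :: (bool list \<Rightarrow> 'a) \<times> (bool list \<Rightarrow> real)) p' \<longleftrightarrow>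
     Inv (Suc m) (fst p') (snd p') \<and>
     (\<forall>v\<in>Wd (Suc m). cball (fst p' v) (snd p' v) \<subseteq> cball (fst p (butlast v)) (snd p (butlast v))) \<and>
     Reqs (Suc m) (\<lambda>v. cball (fst p' v) (snd p' v) \<inter> X)" for m p p'
  have "\<forall>m p. \<exists>p'. Inv m (fst p) (snd p) \<longrightarrow> P m p p'"
  proof (intro allI)
    fix m p
    show "\<exists>p'. Inv m (fst p) (snd p) \<longrightarrow> P m p p'"
    proof (cases "Inv m (fst p) (snd p)")
      case True
      from step[OF True] obtain c' r' where "Inv (Suc m) c' r'"
        "\<forall>v\<in>Wd (Suc m). cball (c' v) (r' v) \<subseteq> cball (fst p (butlast v)) (snd p (butlast v))"
        "Reqs (Suc m) (\<lambda>v. cball (c' v) (r' v) \<inter> X)" by blast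
      then show ?thesis by (intro exI[of _ "(c', r')"]) (simp add: P_def)
    next
      case False then show ?thesis by simp
    qed
  qed
  then obtain F where F: "\<And>m p. Inv m (fst p) (snd p) \<Longrightarrow> P m p (F m p)" by metis
  obtain x0 where x0: "x0 \<in> X" using Xne by auto
  define st where "st = rec_nat ((\<lambda>_. x0, \<lambda>_. 1) :: (bool list \<Rightarrow> 'a) \<times> (bool list \<Rightarrow> real)) F"
  have st0: "st 0 = (\<lambda>_. x0, \<lambda>_. 1)" and stS: "st (Suc m) = F m (st m)" for m by (simp_all add: st_def)
  have inv: "Inv m (fst (st m)) (snd (st m))" for m
  proof (induction m)
    case 0
    show ?case by (auto simp: Inv_def Wd_def st0 x0)
  next
    case (Suc m)
    from F[OF Suc.IH] show ?case by (simp add: P_def stS)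
  qed
  have "P m (st m) (st (Suc m))" for m using F[OF inv] stS by simp
  then show ?thesis using inv
    by (intro exI[of _ "\<lambda>m. fst (st m)"] exI[of _ "\<lambda>m. snd (st m)"]) (simp add: P_def)
qed

end



lemma subseq_conv:
  fixes f :: "nat \<Rightarrow> 'b::metric_space"
  assumes "\<And>N. \<exists>n\<ge>N. dist (f n) y < 2 / (real N + 1)"
  shows "\<exists>r. strict_mono r \<and> (\<lambda>k. f (r k)) \<longlonglongrightarrow> y"
proof -
  obtain g where g: "\<And>N. g N \<ge> N \<and> dist (f (g N)) y < 2 / (real N + 1)" using assms by metis
  define r where "r = rec_nat (g 0) (\<lambda>k rk. g (Suc rk))"
  have r0: "r 0 = g 0" and rS: "r (Suc k) = g (Suc (r k))" for k by (simp_all add: r_def)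
  have sm: "strict_mono r"
  proof (rule strict_monoI_Suc)
    fix n show "r n < r (Suc n)" using g[of "Suc (r n)"] rS[of n] by simp
  qed
  have bd: "dist (f (r k)) y < 2 / (real k + 1)" for k
  proof (cases k)
    case 0 then show ?thesis using g[of 0] r0 by simp
  next
    case (Suc k')
    have "k \<le> Suc (r k')" using seq_suble[OF sm, of k'] Suc by simp
    then have "2 / (real (Suc (r k')) + 1) \<le> 2 / (real k + 1)" by (intro divide_left_mono) auto
    moreover have "dist (f (r k)) y < 2 / (real (Suc (r k')) + 1)" using g[of "Suc (r k')"] rS[of k'] Suc by simp
    ultimately show ?thesis by linarith
  qed
  have "(\<lambda>k. f (r k)) \<longlonglongrightarrow> y"
    unfolding lim_sequentially
  proof (intro allI impI)
    fix e :: real assume e: "e > 0"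
    obtain N :: nat where N: "2 / e < real N" using reals_Archimedean2 by blast
    have "2 / (real N + 1) < e"
    proof -
      have "2 < e * real N" using N e by (simp add: field_simps)
      then have "2 < e * (real N + 1)" using e by (simp add: algebra_simps)
      then show ?thesis using e by (simp add: field_simps)
    qed
    moreover have "\<forall>k\<ge>N. 2 / (real k + 1) \<le> 2 / (real N + 1)" by (auto intro!: divide_left_mono)
    ultimately show "\<exists>no. \<forall>k\<ge>no. dist (f (r k)) y < e" using bd by (meson less_le_trans order_less_trans)
  qed
  then show ?thesis using sm by blast
qed

lemma nest_inter:
  fixes F :: "nat \<Rightarrow> 'b::metric_space set"
  assumes "\<And>n. compact (F n)" "\<And>n. F n \<noteq> {}" "\<And>n. F (Suc n) \<subseteq> F n"
  shows "\<exists>x. \<forall>n. x \<in> F n"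
proof -
  have mono: "m \<le> n \<Longrightarrow> F n \<subseteq> F m" for m n by (rule lift_Suc_antimono_le[of F, OF assms(3)])
  have "F 0 \<inter> (\<Inter>i\<in>UNIV. F i) \<noteq> {}"
  proof (rule compact_imp_fip_image[of "F 0" UNIV F, OF assms(1)])
    show "closed (F i)" for i using assms(1) by (rule compact_imp_closed)
    fix I' :: "nat set" assume fin: "finite I'"
    define n where "n = Max (insert 0 I')"
    have le: "i \<in> I' \<Longrightarrow> i \<le> n" for i using fin by (simp add: n_def)
    have "F n \<subseteq> F 0" using mono by simp
    moreover have "F n \<subseteq> (\<Inter>i\<in>I'. F i)" using le mono by blast
    ultimately have "F n \<subseteq> F 0 \<inter> (\<Inter>i\<in>I'. F i)" by blast
    then show "F 0 \<inter> (\<Inter>i\<in>I'. F i) \<noteq> {}" using assms(2)[of n] by blast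
  qed
  then show ?thesis by blast
qed

locale cset = wmsys X T for X :: "'a::metric_space set" and T +
  fixes c :: "nat \<Rightarrow> bool list \<Rightarrow> 'a" and r :: "nat \<Rightarrow> bool list \<Rightarrow> real"
  assumes inv: "\<And>m. Inv m (c m) (r m)"
    and nest: "\<And>m v. v \<in> Wd (Suc m) \<Longrightarrow> cball (c (Suc m) v) (r (Suc m) v) \<subseteq> cball (c m (butlast v)) (r m (butlast v))"
    and reqs: "\<And>m. Reqs (Suc m) (\<lambda>v. cball (c (Suc m) v) (r (Suc m) v) \<inter> X)"
begin

definition K where "K m w = cball (c m w) (r m w) \<inter> X"
definition L where "L m = (\<Union>w\<in>Wd m. K m w)"
definition C where "C = (\<Inter>m. L m)"

lemma bw: "v \<in> Wd (Suc m) \<Longrightarrow> butlast v \<in> Wd m" by (simp add: Wd_def)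

lemma K_compact: "compact (K m w)" unfolding K_def by (rule closed_Int_compact[OF closed_cball cX])

lemma K_X: "K m w \<subseteq> X" by (auto simp: K_def)

lemma K_nest: "v \<in> Wd (Suc m) \<Longrightarrow> K (Suc m) v \<subseteq> K m (butlast v)"
  using nest by (auto simp: K_def)

lemma cr: "w \<in> Wd m \<Longrightarrow> c m w \<in> X \<and> 0 < r m w \<and> r m w \<le> 1 / (real m + 1)"
  using inv[of m] by (simp add: Inv_def)

lemma K_ne: "w \<in> Wd m \<Longrightarrow> c m w \<in> K m w" using cr by (auto simp: K_def less_imp_le)

lemma K_diam: assumes "w \<in> Wd m" "x \<in> K m w" "y \<in> K m w" shows "dist x y \<le> 2 / (real m + 1)"
proof -
  have "dist x y \<le> dist (c m w) x + dist (c m w) y" by (rule dist_triangle3)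
  moreover have "dist (c m w) x \<le> r m w" "dist (c m w) y \<le> r m w" using assms(2,3) by (auto simp: K_def)
  ultimately show ?thesis using cr[OF assms(1)] by simp
qed

lemma K_uniq: assumes "w \<in> Wd m" "w' \<in> Wd m" "x \<in> K m w" "x \<in> K m w'" shows "w = w'"
proof (rule ccontr)
  assume "w \<noteq> w'"
  then have "cball (c m w) (r m w) \<inter> cball (c m w') (r m w') = {}" using inv[of m] assms(1,2) by (simp add: Inv_def)
  then show False using assms(3,4) by (auto simp: K_def)
qed

lemma L_dec: "L (Suc m) \<subseteq> L m"
proof
  fix x assume "x \<in> L (Suc m)"
  then obtain v where v: "v \<in> Wd (Suc m)" "x \<in> K (Suc m) v" by (auto simp: L_def)
  then have "x \<in> K m (butlast v)" using K_nest by blast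
  then show "x \<in> L m" using bw[OF v(1)] by (auto simp: L_def)
qed

lemma L_anti: "m \<le> m' \<Longrightarrow> L m' \<subseteq> L m"
  by (rule lift_Suc_antimono_le[of L]) (rule L_dec)

lemma inC: "x \<in> C \<Longrightarrow> \<exists>w\<in>Wd m. x \<in> K m w" by (auto simp: C_def L_def)

lemma C_X: "C \<subseteq> X"
proof
  fix x assume "x \<in> C"
  then obtain w where "x \<in> K 0 w" using inC[of x 0] by blast
  then show "x \<in> X" using K_X by blast
qed

lemma reqsK: "Reqs (Suc m) (K (Suc m))"
  using reqs[of m] by (simp add: K_def[abs_def])

lemma snoc_rep: "butlast (w @ replicate (Suc j) False) = w @ replicate j False"
proof -
  have e: "w @ replicate (Suc j) False = (w @ replicate j False) @ [False]" by (simp add: replicate_append_same)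
  show ?thesis unfolding e by (rule butlast_snoc)
qed

lemma cellC: assumes "w \<in> Wd m" shows "\<exists>x\<in>C. x \<in> K m w"
proof -
  define F where "F j = K (m + j) (w @ replicate j False)" for j
  have Fw: "w @ replicate j False \<in> Wd (m + j)" for j using assms by (simp add: Wd_def)
  have FS: "F (Suc j) \<subseteq> F j" for j
  proof -
    have "w @ replicate (Suc j) False \<in> Wd (Suc (m + j))" using Fw[of "Suc j"] by simp
    then have "K (Suc (m + j)) (w @ replicate (Suc j) False) \<subseteq> K (m + j) (butlast (w @ replicate (Suc j) False))"
      by (rule K_nest)
    then show ?thesis unfolding F_def snoc_rep by simp
  qed
  have "\<exists>x. \<forall>n. x \<in> F n"
  proof (rule nest_inter)
    show "compact (F n)" for n by (simp add: F_def K_compact)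
    show "F n \<noteq> {}" for n using K_ne[OF Fw[of n]] by (auto simp: F_def)
    show "F (Suc n) \<subseteq> F n" for n by (rule FS)
  qed
  then obtain x where x: "\<And>j. x \<in> F j" by blast
  have xL: "x \<in> L (m + j)" for j using x[of j] Fw[of j] by (auto simp: L_def F_def)
  have "x \<in> L k" for k
  proof (cases "m \<le> k")
    case True then show ?thesis using xL[of "k - m"] by simp
  next
    case False then show ?thesis using xL[of 0] L_anti[of k m] by auto
  qed
  then have "x \<in> C" by (simp add: C_def)
  moreover have "x \<in> K m w" using x[of 0] by (simp add: F_def)
  ultimately show ?thesis by blast
qed

lemma small_m: assumes "e > 0" shows "\<exists>m::nat. 2 / (real m + 1) < e"
proof -
  obtain N :: nat where N: "2 / e < real N" using reals_Archimedean2 by blast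
  have "2 < e * real N" using N assms by (simp add: field_simps)
  then have "2 < e * (real N + 1)" using assms by (simp add: algebra_simps)
  then have "2 / (real N + 1) < e" using assms by (simp add: field_simps)
  then show ?thesis by blast
qed

lemma L_closed: "closed (L m)"
  unfolding L_def by (rule compact_imp_closed, rule compact_UN[OF finite_Wd K_compact])

lemma C_compact: "compact C"
proof -
  have "closed C" unfolding C_def using L_closed by (intro closed_INT) auto
  then have "compact (X \<inter> C)" by (rule compact_Int_closed[OF cX])
  moreover have "X \<inter> C = C" using C_X by blast
  ultimately show ?thesis by simp
qed

lemma C_ne: "C \<noteq> {}" using cellC[of "[]" 0] by (auto simp: Wd_def)

lemma C_perfect: assumes x: "x \<in> C" shows "x islimpt C"
  unfolding islimpt_approachable
proof (intro allI impI)
  fix e :: real assume e: "e > 0"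
  obtain m where m: "2 / (real m + 1) < e" using small_m[OF e] by blast
  obtain u where u: "u \<in> Wd (Suc m)" "x \<in> K (Suc m) u" using inC[OF x] by blast
  define w where "w = butlast u"
  define u' where "u' = w @ [\<not> last u]"
  have unn: "u \<noteq> []" using u(1) by (auto simp: Wd_def)
  have u_eq: "u = w @ [last u]" using unn by (simp add: w_def)
  have wW: "w \<in> Wd m" using bw[OF u(1)] by (simp add: w_def)
  have u': "u' \<in> Wd (Suc m)" using wW by (simp add: u'_def Wd_def)
  have ne: "u' \<noteq> u"
  proof
    assume "u' = u"
    then have "last u' = last u" by simp
    then show False by (simp add: u'_def)
  qed
  obtain y where y: "y \<in> C" "y \<in> K (Suc m) u'" using cellC[OF u'] by blast
  have yx: "y \<noteq> x"
  proof
    assume "y = x"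
    then have "u = u'" using K_uniq[OF u(1) u' u(2)] y(2) by simp
    then show False using ne by simp
  qed
  have "x \<in> K m w" using K_nest[OF u(1)] u(2) by (auto simp: w_def)
  moreover have "y \<in> K m w" using K_nest[OF u'] y(2) by (auto simp: u'_def)
  ultimately have "dist y x \<le> 2 / (real m + 1)" using K_diam[OF wW] by blast
  then show "\<exists>x'\<in>C. x' \<noteq> x \<and> dist x' x < e" using y(1) yx m by force
qed

lemma C_td: assumes S: "S \<subseteq> C" "connected S" shows "\<exists>a. S \<subseteq> {a}"
proof (cases "S = {}")
  case True then show ?thesis by auto
next
  case False
  then obtain a where a: "a \<in> S" by auto
  have "S \<subseteq> {a}"
  proof
    fix b assume b: "b \<in> S"
    show "b \<in> {a}"
    proof (rule ccontr)
      assume "b \<notin> {a}" then have ab: "a \<noteq> b" by auto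
      then have "dist a b > 0" by simp
      then obtain m where m: "2 / (real m + 1) < dist a b" using small_m by blast
      obtain wa where wa: "wa \<in> Wd m" "a \<in> K m wa" using inC[of a m] a S(1) by blast
      obtain wb where wb: "wb \<in> Wd m" "b \<in> K m wb" using inC[of b m] b S(1) by blast
      have wab: "wa \<noteq> wb"
      proof
        assume "wa = wb"
        then have "dist a b \<le> 2 / (real m + 1)" using K_diam[OF wa(1) wa(2)] wb(2) by simp
        then show False using m by simp
      qed
      define A1 where "A1 = K m wa"
      define A2 where "A2 = (\<Union>w\<in>Wd m - {wa}. K m w)"
      have c1: "closed A1" unfolding A1_def by (rule compact_imp_closed[OF K_compact])
      have c2: "closed A2" unfolding A2_def
        by (intro closed_UN) (simp_all add: finite_Wd compact_imp_closed[OF K_compact])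
      have sub: "S \<subseteq> A1 \<union> A2"
      proof
        fix z assume "z \<in> S"
        then obtain w where w: "w \<in> Wd m" "z \<in> K m w" using inC[of z m] S(1) by blast
        show "z \<in> A1 \<union> A2"
        proof (cases "w = wa")
          case True then show ?thesis using w by (simp add: A1_def)
        next
          case False then show ?thesis using w unfolding A2_def by blast
        qed
      qed
      have disj: "A1 \<inter> A2 \<inter> S = {}"
      proof (rule ccontr)
        assume "A1 \<inter> A2 \<inter> S \<noteq> {}"
        then obtain z w where z: "z \<in> K m wa" "w \<in> Wd m" "w \<noteq> wa" "z \<in> K m w"
          unfolding A1_def A2_def by blast
        then show False using K_uniq[OF wa(1) z(2) z(1) z(4)] by simp
      qed
      have ne1: "A1 \<inter> S \<noteq> {}" using a wa(2) by (auto simp: A1_def)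
      have ne2: "A2 \<inter> S \<noteq> {}" using b wb wab unfolding A2_def by blast
      show False using S(2) c1 c2 sub disj ne1 ne2 unfolding connected_closed by blast
    qed
  qed
  then show ?thesis by blast
qed

lemma C_cantor: "cantor_set C"
  unfolding cantor_set_def
proof (intro conjI ballI allI impI)
  show "C \<noteq> {}" by (rule C_ne)
  show "compact C" by (rule C_compact)
  show "x islimpt C" if "x \<in> C" for x using that by (rule C_perfect)
  show "\<exists>a. S \<subseteq> {a}" if "S \<subseteq> C \<and> connected S" for S using that C_td by blast
qed

lemma C_myc: "mycielski_set C"
  unfolding mycielski_set_def by (intro exI[of _ "{C}"]) (simp add: C_cantor)

end



context cset begin

lemma C_omega: assumes x: "x \<in> C" shows "omega_limit T x = X"
proof
  show "omega_limit T x \<subseteq> X"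
  proof
    fix y assume "y \<in> omega_limit T x"
    then obtain rr where rr: "strict_mono rr" "(\<lambda>k. (T ^^ rr k) x) \<longlonglongrightarrow> y" by (auto simp: omega_limit_def)
    have inX: "\<And>k. (T ^^ rr k) x \<in> X" using x C_X iter_in by blast
    show "y \<in> X"
      by (rule closed_sequentially[where f="\<lambda>k. (T ^^ rr k) x", OF compact_imp_closed[OF cX] inX rr(2)])
  qed
  show "X \<subseteq> omega_limit T x"
  proof
    fix y assume y: "y \<in> X"
    have "\<exists>n\<ge>N. dist ((T ^^ n) x) y < 2 / (real N + 1)" for N
    proof -
      obtain q where q: "q \<in> net (Suc N)" "y \<in> ball q (1 / (real (Suc N) + 1))"
        using net(3)[of "Suc N"] y by blast
      obtain w where w: "w \<in> Wd (Suc N)" "x \<in> K (Suc N) w" using inC[OF x] by blast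
      have "(w, q) \<in> IO (Suc N)" using w q by (simp add: IO_def)
      then have "RO (Suc N) (w, q) (K (Suc N))" using reqsK[of N] by (simp add: Reqs_def)
      then obtain n where n: "n \<ge> Suc N" "\<forall>z\<in>K (Suc N) w. (T ^^ n) z \<in> ball q (1 / (real (Suc N) + 1))"
        by (auto simp: RO_def)
      have "dist q ((T ^^ n) x) < 1 / (real (Suc N) + 1)" using n(2) w(2) by auto
      moreover have "dist q y < 1 / (real (Suc N) + 1)" using q(2) by simp
      moreover have "dist ((T ^^ n) x) y \<le> dist q ((T ^^ n) x) + dist q y" by (rule dist_triangle3)
      moreover have "1 / (real (Suc N) + 1) \<le> 1 / (real N + 1)" by (auto intro!: divide_left_mono)
      moreover have "2 / (real N + 1) = 2 * (1 / (real N + 1))" by simp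
      ultimately have "dist ((T ^^ n) x) y < 2 / (real N + 1)" by linarith
      then show ?thesis using n(1) by (intro exI[of _ n]) auto
    qed
    from subseq_conv[of "\<lambda>n. (T ^^ n) x" y, OF this] obtain rr where
      "strict_mono rr" "(\<lambda>k. (T ^^ rr k) x) \<longlonglongrightarrow> y" by blast
    then show "y \<in> omega_limit T x" by (auto simp: omega_limit_def)
  qed
qed

lemma C_LY:
  fixes x :: "nat \<Rightarrow> 'a" and s :: "nat \<Rightarrow> nat"
  assumes d: "2 \<le> d" and x: "\<forall>i<d. x i \<in> C" and inj: "inj_on x {..<d}"
  shows "li_yorke_tuple T d (dl d) (\<lambda>i. (T ^^ s i) (x i))"
proof -
  define g where "g n = Max {dist ((T ^^ n) ((T ^^ s i) (x i))) ((T ^^ n) ((T ^^ s j) (x j))) |i j. i < d \<and> j < d}" for n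
  define h where "h n = Min {dist ((T ^^ n) ((T ^^ s i) (x i))) ((T ^^ n) ((T ^^ s j) (x j))) |i j. i < d \<and> j < d \<and> i \<noteq> j}" for n
  define e0 where "e0 = Min {dist (x i) (x j) |i j. i < d \<and> j < d \<and> i \<noteq> j}"
  have e0_le: "e0 \<le> dist (x i) (x j)" if "i < d" "j < d" "i \<noteq> j" for i j
    unfolding e0_def by (rule Min_le[OF fin_pairs]) (use that in auto)
  have e0: "0 < e0"
  proof -
    have ne: "dist (x 0) (x 1) \<in> {dist (x i) (x j) |i j. i < d \<and> j < d \<and> i \<noteq> j}"
      using d by (intro CollectI exI[of _ 0] exI[of _ 1]) auto
    have "\<forall>a\<in>{dist (x i) (x j) |i j. i < d \<and> j < d \<and> i \<noteq> j}. 0 < a"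
    proof
      fix a assume "a \<in> {dist (x i) (x j) |i j. i < d \<and> j < d \<and> i \<noteq> j}"
      then obtain i j where ij: "a = dist (x i) (x j)" "i < d" "j < d" "i \<noteq> j" by blast
      moreover have "x i \<noteq> x j" using ij inj by (auto simp: inj_on_def)
      ultimately show "0 < a" by simp
    qed
    then show ?thesis unfolding e0_def using ne by (subst Min_gr_iff[OF fin_pairs]) auto
  qed
  obtain m1 where m1: "2 / (real m1 + 1) < e0" using small_m[OF e0] by blast
  define m0 where "m0 = m1 + d + Max (s ` {..<d})"
  have s_le: "s i \<le> m0" if "i < d" for i
  proof -
    have "s i \<le> Max (s ` {..<d})" using that by (intro Max_ge) auto
    then show ?thesis by (simp add: m0_def)
  qed
  have words: "\<exists>W. (\<forall>i<d. W i \<in> Wd M \<and> x i \<in> K M (W i)) \<and> (d, map W [0..<d], map s [0..<d]) \<in> IS M"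
    if M: "M = Suc (m0 + N)" for N M
  proof -
    have "\<forall>i<d. \<exists>w. w \<in> Wd M \<and> x i \<in> K M w" using inC x by blast
    then obtain W where W: "\<forall>i<d. W i \<in> Wd M \<and> x i \<in> K M (W i)" by metis
    have injW: "inj_on W {..<d}"
    proof (rule inj_onI)
      fix i j assume i: "i \<in> {..<d}" and j: "j \<in> {..<d}" and e: "W i = W j"
      show "i = j"
      proof (rule ccontr)
        assume ij: "i \<noteq> j"
        have "x j \<in> K M (W i)" using W j e by auto
        then have "dist (x i) (x j) \<le> 2 / (real M + 1)" using K_diam[of "W i" M "x i" "x j"] W i by auto
        moreover have "2 / (real M + 1) \<le> 2 / (real m1 + 1)" using M by (auto intro!: divide_left_mono simp: m0_def)
        ultimately show False using e0_le[of i j] i j ij m1 by auto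
      qed
    qed
    have "d \<le> M" using M by (simp add: m0_def)
    moreover have "set (map W [0..<d]) \<subseteq> Wd M" using W by auto
    moreover have "set (map s [0..<d]) \<subseteq> {..M}" using s_le M by fastforce
    moreover have "distinct (map W [0..<d])" using injW by (simp add: distinct_map atLeast0LessThan)
    ultimately have "(d, map W [0..<d], map s [0..<d]) \<in> IS M" using d by (simp add: IS_def)
    then show ?thesis using W by blast
  qed
  have d0: "0 < d" "1 < d" using d by auto
  have fin1: "finite {dist ((T ^^ n) ((T ^^ s i) (x i))) ((T ^^ n) ((T ^^ s j) (x j))) |i j. i < d \<and> j < d}" for n
    using fin_pairs[of "\<lambda>i j. dist ((T ^^ n) ((T ^^ s i) (x i))) ((T ^^ n) ((T ^^ s j) (x j)))" d "\<lambda>i j. True"] by simp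
  have ne1: "dist ((T ^^ n) ((T ^^ s 0) (x 0))) ((T ^^ n) ((T ^^ s 0) (x 0))) \<in>
      {dist ((T ^^ n) ((T ^^ s i) (x i))) ((T ^^ n) ((T ^^ s j) (x j))) |i j. i < d \<and> j < d}" for n
    using d0 by (intro CollectI exI[of _ 0] exI[of _ 0]) auto
  have ne2: "dist ((T ^^ n) ((T ^^ s 0) (x 0))) ((T ^^ n) ((T ^^ s 1) (x 1))) \<in>
      {dist ((T ^^ n) ((T ^^ s i) (x i))) ((T ^^ n) ((T ^^ s j) (x j))) |i j. i < d \<and> j < d \<and> i \<noteq> j}" for n
    using d0 by (intro CollectI exI[of _ 0] exI[of _ 1]) auto
  have gnn: "0 \<le> g n" for n
  proof -
    have "dist ((T ^^ n) ((T ^^ s 0) (x 0))) ((T ^^ n) ((T ^^ s 0) (x 0))) \<le> g n"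
      unfolding g_def by (rule Max_ge[OF fin1 ne1])
    then show ?thesis by simp
  qed
  have smallN: "\<exists>n\<ge>N. g n < 1 / (real N + 1)" for N
  proof -
    define M where "M = Suc (m0 + N)"
    obtain W where W: "\<forall>i<d. W i \<in> Wd M \<and> x i \<in> K M (W i)" and IS: "(d, map W [0..<d], map s [0..<d]) \<in> IS M"
      using words[OF M_def] by blast
    have "RS M (d, map W [0..<d], map s [0..<d]) (K M)" using reqsK[of "m0 + N"] IS by (simp add: Reqs_def M_def)
    then have "\<exists>n\<ge>M. \<exists>q. \<forall>i<d. \<forall>z\<in>K M (map W [0..<d] ! i). (T ^^ n) ((T ^^ (map s [0..<d] ! i)) z) \<in> ball q (eps M)"
      by (simp only: RS_def prod.case)
    then obtain n q where n: "n \<ge> M"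
      "\<forall>i<d. \<forall>z\<in>K M (map W [0..<d] ! i). (T ^^ n) ((T ^^ (map s [0..<d] ! i)) z) \<in> ball q (eps M)"
      by blast
    have inb: "(T ^^ n) ((T ^^ s i) (x i)) \<in> ball q (eps M)" if "i < d" for i
      using n(2) W that by auto
    have "\<forall>a\<in>{dist ((T ^^ n) ((T ^^ s i) (x i))) ((T ^^ n) ((T ^^ s j) (x j))) |i j. i < d \<and> j < d}. a < 1 / (real N + 1)"
    proof
      fix a assume "a \<in> {dist ((T ^^ n) ((T ^^ s i) (x i))) ((T ^^ n) ((T ^^ s j) (x j))) |i j. i < d \<and> j < d}"
      then obtain i j where ij: "a = dist ((T ^^ n) ((T ^^ s i) (x i))) ((T ^^ n) ((T ^^ s j) (x j)))" "i < d" "j < d" by blast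
      have "a \<le> dist q ((T ^^ n) ((T ^^ s i) (x i))) + dist q ((T ^^ n) ((T ^^ s j) (x j)))"
        unfolding ij(1) by (rule dist_triangle3)
      moreover have "dist q ((T ^^ n) ((T ^^ s i) (x i))) < eps M" "dist q ((T ^^ n) ((T ^^ s j) (x j))) < eps M"
        using inb[OF ij(2)] inb[OF ij(3)] by auto
      moreover have "2 * eps M \<le> 1 / (real N + 1)" by (simp add: eps_def M_def divide_simps)
      ultimately show "a < 1 / (real N + 1)" by linarith
    qed
    note allS = this
    have neS: "{dist ((T ^^ n) ((T ^^ s i) (x i))) ((T ^^ n) ((T ^^ s j) (x j))) |i j. i < d \<and> j < d} \<noteq> {}" using ne1[of n] by blast
    have "g n < 1 / (real N + 1)" unfolding g_def
      by (rule iffD2[OF Max_less_iff[OF fin1 neS] allS])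
    moreover have "n \<ge> N" using n(1) by (simp add: M_def)
    ultimately show ?thesis by blast
  qed
  have bigN: "\<exists>n\<ge>N. 2 * dl d < h n" for N
  proof -
    define M where "M = Suc (m0 + N)"
    obtain W where W: "\<forall>i<d. W i \<in> Wd M \<and> x i \<in> K M (W i)" and IS: "(d, map W [0..<d], map s [0..<d]) \<in> IS M"
      using words[OF M_def] by blast
    have "RB M (d, map W [0..<d], map s [0..<d]) (K M)" using reqsK[of "m0 + N"] IS by (simp add: Reqs_def M_def)
    then have "\<exists>n\<ge>M. \<forall>i<d. \<forall>z\<in>K M (map W [0..<d] ! i). (T ^^ n) ((T ^^ (map s [0..<d] ! i)) z) \<in> ball (pt i) (DD d / 8)"
      by (simp only: RB_def prod.case)
    then obtain n where n: "n \<ge> M"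
      "\<forall>i<d. \<forall>z\<in>K M (map W [0..<d] ! i). (T ^^ n) ((T ^^ (map s [0..<d] ! i)) z) \<in> ball (pt i) (DD d / 8)"
      by blast
    have inb: "(T ^^ n) ((T ^^ s i) (x i)) \<in> ball (pt i) (DD d / 8)" if "i < d" for i
      using n(2) W that by auto
    have DDp: "0 < DD d" by (rule DD_pos[OF d])
    have dlle: "2 * dl d \<le> DD d / 2" by (simp add: dl_def)
    have fin2: "finite {dist ((T ^^ n) ((T ^^ s i) (x i))) ((T ^^ n) ((T ^^ s j) (x j))) |i j. i < d \<and> j < d \<and> i \<noteq> j}"
      by (rule fin_pairs)
    have "\<forall>a\<in>{dist ((T ^^ n) ((T ^^ s i) (x i))) ((T ^^ n) ((T ^^ s j) (x j))) |i j. i < d \<and> j < d \<and> i \<noteq> j}. 2 * dl d < a"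
    proof
      fix a assume "a \<in> {dist ((T ^^ n) ((T ^^ s i) (x i))) ((T ^^ n) ((T ^^ s j) (x j))) |i j. i < d \<and> j < d \<and> i \<noteq> j}"
      then obtain i j where ij: "a = dist ((T ^^ n) ((T ^^ s i) (x i))) ((T ^^ n) ((T ^^ s j) (x j)))" "i < d" "j < d" "i \<noteq> j" by blast
      define p where "p = (T ^^ n) ((T ^^ s i) (x i))"
      define q where "q = (T ^^ n) ((T ^^ s j) (x j))"
      have "dist (pt i) (pt j) \<le> dist (pt i) p + dist p (pt j)" by (rule dist_triangle)
      moreover have "dist p (pt j) \<le> dist p q + dist q (pt j)" by (rule dist_triangle)
      moreover have "dist (pt i) p < DD d / 8" using inb[OF ij(2)] by (simp add: p_def)
      moreover have "dist q (pt j) < DD d / 8" using inb[OF ij(3)] by (simp add: q_def dist_commute)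
      moreover have "DD d \<le> dist (pt i) (pt j)" by (rule DD_le[OF ij(2,3,4)])
      moreover have "a = dist p q" by (simp add: ij(1) p_def q_def)
      ultimately show "2 * dl d < a" using dlle DDp by linarith
    qed
    note allS = this
    have neS: "{dist ((T ^^ n) ((T ^^ s i) (x i))) ((T ^^ n) ((T ^^ s j) (x j))) |i j. i < d \<and> j < d \<and> i \<noteq> j} \<noteq> {}" using ne2[of n] by blast
    have "2 * dl d < h n" unfolding h_def
      by (rule iffD2[OF Min_gr_iff[OF fin2 neS] allS])
    moreover have "n \<ge> N" using n(1) by (simp add: M_def)
    ultimately show ?thesis by blast
  qed
  have lim0: "liminf (\<lambda>n. ereal (g n)) = 0"
  proof (rule antisym)
    have "liminf (\<lambda>n. ereal (g n)) \<le> ereal e" if e: "0 < e" for e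
      unfolding liminf_SUP_INF
    proof (rule SUP_least)
      fix N
      obtain N' where N': "2 / (real N' + 1) < e" using small_m[OF e] by blast
      obtain n where n: "n \<ge> max N N'" "g n < 1 / (real (max N N') + 1)" using smallN[of "max N N'"] by blast
      have "1 / (real (max N N') + 1) \<le> 1 / (real N' + 1)" by (auto intro!: divide_left_mono)
      moreover have "1 / (real N' + 1) \<le> 2 / (real N' + 1)" by (simp add: divide_right_mono)
      ultimately have "g n \<le> e" using n(2) N' by linarith
      then have "ereal (g n) \<le> ereal e" by simp
      moreover have "n \<in> {N..}" using n(1) by simp
      ultimately show "Inf ((\<lambda>n. ereal (g n)) ` {N..}) \<le> ereal e" by (rule INF_lower2[rotated])
    qed
    then show "liminf (\<lambda>n. ereal (g n)) \<le> 0"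
      by - (rule ereal_le_epsilon2, simp)
    have "0 \<le> Inf ((\<lambda>n. ereal (g n)) ` {0..})" by (rule INF_greatest) (simp add: gnn)
    also have "\<dots> \<le> (SUP N. Inf ((\<lambda>n. ereal (g n)) ` {N..}))" by (rule SUP_upper) simp
    finally show "0 \<le> liminf (\<lambda>n. ereal (g n))" unfolding liminf_SUP_INF .
  qed
  have dlp: "0 < dl d" using DD_pos[OF d] by (simp add: dl_def)
  have "ereal (2 * dl d) \<le> limsup (\<lambda>n. ereal (h n))"
    unfolding limsup_INF_SUP
  proof (rule INF_greatest)
    fix N :: nat
    obtain n where n: "n \<ge> N" "2 * dl d < h n" using bigN[of N] by blast
    show "ereal (2 * dl d) \<le> Sup ((\<lambda>n. ereal (h n)) ` {N..})"
      by (rule SUP_upper2[of n]) (use n in auto)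
  qed
  moreover have "ereal (dl d) < ereal (2 * dl d)" using dlp by simp
  ultimately have lims: "ereal (dl d) < limsup (\<lambda>n. ereal (h n))" by (rule order.strict_trans2[rotated])
  show ?thesis unfolding li_yorke_tuple_def using lim0 lims by (simp add: g_def h_def)
qed

lemma main_result:
  "\<exists>(\<delta>::nat \<Rightarrow> real) M.
     (\<forall>d\<ge>2. 0 < \<delta> d \<and> \<delta> d < 1) \<and> M \<subseteq> X \<and> mycielski_set M \<and>
     (\<forall>d\<ge>2. \<forall>(x::nat \<Rightarrow> 'a) (s::nat \<Rightarrow> nat).
         (\<forall>i<d. x i \<in> M) \<and> inj_on x {..<d} \<longrightarrow>
         li_yorke_tuple T d (\<delta> d) (\<lambda>i. (T ^^ s i) (x i))) \<and>
     (\<forall>x\<in>M. omega_limit T x = X)"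
proof -
  have 1: "\<forall>d\<ge>2. 0 < dl d \<and> dl d < 1"
  proof (intro allI impI conjI)
    fix d :: nat assume d: "2 \<le> d"
    show "0 < dl d" using DD_pos[OF d] by (simp add: dl_def)
    show "dl d < 1" by (simp add: dl_def)
  qed
  have 3: "\<forall>d\<ge>2. \<forall>(x::nat \<Rightarrow> 'a) (s::nat \<Rightarrow> nat).
         (\<forall>i<d. x i \<in> C) \<and> inj_on x {..<d} \<longrightarrow>
         li_yorke_tuple T d (dl d) (\<lambda>i. (T ^^ s i) (x i))"
  proof (intro allI impI)
    fix d :: nat and x :: "nat \<Rightarrow> 'a" and s :: "nat \<Rightarrow> nat"
    assume "2 \<le> d" "(\<forall>i<d. x i \<in> C) \<and> inj_on x {..<d}"
    then show "li_yorke_tuple T d (dl d) (\<lambda>i. (T ^^ s i) (x i))" using C_LY by blast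
  qed
  have 4: "\<forall>x\<in>C. omega_limit T x = X" using C_omega by blast
  show ?thesis
    by (intro exI[of _ dl] exI[of _ C] conjI 1 C_X C_myc 3 4)
qed

end

lemma (in wmsys) main_wm:
  "\<exists>(\<delta>::nat \<Rightarrow> real) M.
     (\<forall>d\<ge>2. 0 < \<delta> d \<and> \<delta> d < 1) \<and> M \<subseteq> X \<and> mycielski_set M \<and>
     (\<forall>d\<ge>2. \<forall>(x::nat \<Rightarrow> 'a) (s::nat \<Rightarrow> nat).
         (\<forall>i<d. x i \<in> M) \<and> inj_on x {..<d} \<longrightarrow>
         li_yorke_tuple T d (\<delta> d) (\<lambda>i. (T ^^ s i) (x i))) \<and>
     (\<forall>x\<in>M. omega_limit T x = X)"
proof -
  obtain c r where cr: "\<forall>m. Inv m (c m) (r m) \<and>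
    (\<forall>v\<in>Wd (Suc m). cball (c (Suc m) v) (r (Suc m) v) \<subseteq> cball (c m (butlast v)) (r m (butlast v))) \<and>
    Reqs (Suc m) (\<lambda>v. cball (c (Suc m) v) (r (Suc m) v) \<inter> X)"
    using scheme by blast
  interpret cs: cset X T c r
    by (rule cset.intro[OF wmsys_axioms], unfold_locales) (use cr in auto)
  show ?thesis by (rule cs.main_result)
qed

theorem mainTheorem10:
  fixes X :: "'a::metric_space set" and T :: "'a \<Rightarrow> 'a"
  assumes "compact X"
    and "\<exists>a\<in>X. \<exists>b\<in>X. a \<noteq> b"
    and "T ` X \<subseteq> X"
    and "continuous_on X T"
    and "weakly_mixing X T"
  shows "\<exists>(\<delta>::nat \<Rightarrow> real) M.
           (\<forall>d\<ge>2. 0 < \<delta> d \<and> \<delta> d < 1) \<and> M \<subseteq> X \<and> mycielski_set M \<and>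
           (\<forall>d\<ge>2. \<forall>(x::nat \<Rightarrow> 'a) (s::nat \<Rightarrow> nat).
               (\<forall>i<d. x i \<in> M) \<and> inj_on x {..<d} \<longrightarrow>
               li_yorke_tuple T d (\<delta> d) (\<lambda>i. (T ^^ s i) (x i))) \<and>
           (\<forall>x\<in>M. omega_limit T x = X)"
proof -
  interpret w: wmsys X T by (rule wmsys.intro) (rule assms)+
  show ?thesis by (rule w.main_wm)
qed


end
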